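(* Let $m\ge 2$ be an integer and let $\mathcal{A}\subset\mathbb{R}$ be a finite alphabet. Let $(X^{(j)}_i)_{i\ge 1,\,1\le j\le m}$ be independent and identically distributed random variables with values in $\mathcal{A}$. Let $S:\mathcal{A}^m\to[0,\infty)$ be a function that is not identically zero, is invariant under permutations of its $m$ arguments, satisfies $s^*:=\sup_{x\in\mathcal{A}^m}S(x)<\infty$, and for which there is a constant $D>0$ such that $|S(x)-S(y)|\le D$ whenever $x,y\in\mathcal{A}^m$ differ in at most one coordinate. For $N\in\mathbb{N}$ let $L_N$ be the optimal alignment score of the $m$ words $X^{(j)}_1\cdots X^{(j)}_N$, $j=1,\dots,m$. Then for every $n\in\mathbb{N}$ and every $x>0$, $$\mathbb{P}\big(L_{m^2n}\ge m^2x\big)\le 2^{-m}m^{4m}n^{2m}\Big(\mathbb{P}\big(L_{mn}\ge m(x-s^* )\big)\Big)^{1/m}.$$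
   Context: Alignments and optimal score: for finite words $w^{(1)},\dots,w^{(m)}$ over $\mathcal{A}$ of lengths $\ell_1,\dots,\ell_m$, an alignment is a choice of an integer $k\ge 0$ and, for each $j$, indices $1\le \pi^{(j)}_1<\cdots<\pi^{(j)}_k\le \ell_j$; its score is $\sum_{i=1}^k S(w^{(1)}_{\pi^{(1)}_i},\dots,w^{(m)}_{\pi^{(m)}_i})$. The optimal score $L(w^{(1)};\dots;w^{(m)})$ is the maximum score over all alignments. *)

theory Defs
  imports "HOL-Probability.Probability"
begin

text \<open>Words are lists; an m-tuple of letters is a list of length m.
  An alignment of the words ws (0-based positions) is a number k and, for each word j,
  a strictly increasing map of {..<k} into the positions of word j.\<close>

definition alignment_scores :: "(real list \<Rightarrow> real) \<Rightarrow> real list list \<Rightarrow> real set" where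
  "alignment_scores S ws =
     {(\<Sum>i<k. S (map (\<lambda>j. (ws ! j) ! (\<pi> j i)) [0..<length ws])) | (k::nat) (\<pi>::nat \<Rightarrow> nat \<Rightarrow> nat).
        \<forall>j < length ws. strict_mono_on {..<k} (\<pi> j) \<and> (\<forall>i<k. \<pi> j i < length (ws ! j))}"

definition opt_score :: "(real list \<Rightarrow> real) \<Rightarrow> real list list \<Rightarrow> real" where
  "opt_score S ws = Sup (alignment_scores S ws)"

definition L_N :: "(real list \<Rightarrow> real) \<Rightarrow> nat \<Rightarrow> (nat \<Rightarrow> nat \<Rightarrow> 'w \<Rightarrow> real) \<Rightarrow> nat \<Rightarrow> 'w \<Rightarrow> real" where
  "L_N S m X N \<omega> = opt_score S (map (\<lambda>j. map (\<lambda>i. X i j \<omega>) [1..<N+1]) [1..<m+1])"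

end

theory Submission
  imports Defs
begin


lemma sum_lt_add: "(\<Sum>i<a+(b::nat). f i) = (\<Sum>i<a. f i) + (\<Sum>i<b. (f (a+i) :: 'a::comm_monoid_add))"
  by (induct b) (simp_all add: add_ac)
lemma sum_ivl_shift: "(\<Sum>i\<in>{a..<a+(b::nat)}. f i) = (\<Sum>i<b. (f (a+i) :: 'a::comm_monoid_add))"
  by (induct b) (simp_all add: add_ac)
lemma map_upt_shift: "map f [a..<a+b] = map (\<lambda>i. f (a+i)) [0..<b]"
  by (induct b) auto

definition score :: "(real list \<Rightarrow> real) \<Rightarrow> real list list \<Rightarrow> nat \<Rightarrow> (nat \<Rightarrow> nat \<Rightarrow> nat) \<Rightarrow> real" where
  "score S ws k \<pi> = (\<Sum>i<k. S (map (\<lambda>j. (ws ! j) ! (\<pi> j i)) [0..<length ws]))"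

definition valid :: "real list list \<Rightarrow> nat \<Rightarrow> (nat \<Rightarrow> nat \<Rightarrow> nat) \<Rightarrow> bool" where
  "valid ws k \<pi> \<longleftrightarrow> (\<forall>j < length ws. strict_mono_on {..<k} (\<pi> j) \<and> (\<forall>i<k. \<pi> j i < length (ws ! j)))"

lemma alignment_scores_eq: "alignment_scores S ws = {score S ws k \<pi> | k \<pi>. valid ws k \<pi>}"
  by (simp add: alignment_scores_def score_def valid_def)

lemma valid_k_le:
  assumes "valid ws k \<pi>" "0 < length ws" shows "k \<le> length (ws!0)"
proof -
  have sm: "strict_mono_on {..<k} (\<pi> 0)" and lt: "\<forall>i<k. \<pi> 0 i < length (ws ! 0)"
    using assms unfolding valid_def by auto
  have "card {..<k} \<le> card {..<length (ws!0)}"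
    apply (rule card_inj_on_le[OF strict_mono_on_imp_inj_on[OF sm]])
    using lt by auto
  then show ?thesis by simp
qed

lemma finite_scores:
  assumes "0 < length ws" shows "finite (alignment_scores S ws)"
proof -
  define n where "n = length ws"
  define K where "K = length (ws!0)"
  define F where "F = (SIGMA k:{..K}. PiE {..<n} (\<lambda>j. PiE {..<k} (\<lambda>i. {..<length (ws!j)})))"
  have fin: "finite F" unfolding F_def
    by (intro finite_SigmaI finite_PiE) auto
  have "alignment_scores S ws \<subseteq> (\<lambda>(k,\<pi>). score S ws k \<pi>) ` F"
  proof
    fix s assume "s \<in> alignment_scores S ws"
    then obtain k \<pi> where s: "s = score S ws k \<pi>" and v: "valid ws k \<pi>"
      unfolding alignment_scores_eq by auto
    define \<pi>' where "\<pi>' = (\<lambda>j\<in>{..<n}. \<lambda>i\<in>{..<k}. \<pi> j i)"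
    have "k \<le> K" using valid_k_le[OF v assms] K_def by simp
    moreover have "\<pi>' \<in> PiE {..<n} (\<lambda>j. PiE {..<k} (\<lambda>i. {..<length (ws!j)}))"
      using v unfolding valid_def \<pi>'_def n_def by auto
    moreover have "score S ws k \<pi>' = score S ws k \<pi>"
      unfolding score_def \<pi>'_def n_def by (intro sum.cong refl arg_cong[where f=S] map_cong) auto
    ultimately show "s \<in> (\<lambda>(k,\<pi>). score S ws k \<pi>) ` F"
      unfolding F_def s by (intro image_eqI[where x="(k,\<pi>')"]) auto
  qed
  then show ?thesis using finite_subset fin by blast
qed

lemma valid_0: "valid ws 0 \<pi>" by (simp add: valid_def)

lemma scores_ne: "alignment_scores S ws \<noteq> {}"
  unfolding alignment_scores_eq using valid_0 by blast

lemma opt_ge: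
  assumes "0 < length ws" "valid ws k \<pi>" shows "score S ws k \<pi> \<le> opt_score S ws"
  unfolding opt_score_def
  apply (rule cSup_upper)
  using assms finite_scores[OF assms(1)] unfolding alignment_scores_eq
  by (auto intro: bdd_above_finite)

lemma opt_attained:
  assumes "0 < length ws" shows "\<exists>k \<pi>. valid ws k \<pi> \<and> opt_score S ws = score S ws k \<pi>"
proof -
  have "opt_score S ws \<in> alignment_scores S ws"
    unfolding opt_score_def using finite_scores[OF assms] scores_ne
    by (simp add: cSup_eq_Max)
  then show ?thesis unfolding alignment_scores_eq by auto
qed

lemma opt_nonneg: assumes "0 < length ws" shows "0 \<le> opt_score S ws"
  using opt_ge[OF assms valid_0, of S] by (simp add: score_def)

lemma opt_append:
  assumes "length us = n" "length vs = n" "0 < n"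
  shows "opt_score S us + opt_score S vs \<le> opt_score S (map (\<lambda>j. us!j @ vs!j) [0..<n])"
proof -
  obtain k1 \<pi>1 where v1: "valid us k1 \<pi>1" and o1: "opt_score S us = score S us k1 \<pi>1"
    using opt_attained assms by (metis)
  obtain k2 \<pi>2 where v2: "valid vs k2 \<pi>2" and o2: "opt_score S vs = score S vs k2 \<pi>2"
    using opt_attained assms by (metis)
  define ws where "ws = map (\<lambda>j. us!j @ vs!j) [0..<n]"
  define \<pi> where "\<pi> = (\<lambda>j i. if i < k1 then \<pi>1 j i else length (us!j) + \<pi>2 j (i - k1))"
  have lw: "length ws = n" unfolding ws_def by simp
  have v: "valid ws (k1+k2) \<pi>"
    unfolding valid_def lw
  proof (intro allI impI conjI)
    fix j assume j: "j < n"
    have sm1: "strict_mono_on {..<k1} (\<pi>1 j)" and b1: "\<forall>i<k1. \<pi>1 j i < length (us!j)"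
      using v1 j assms unfolding valid_def by auto
    have sm2: "strict_mono_on {..<k2} (\<pi>2 j)" and b2: "\<forall>i<k2. \<pi>2 j i < length (vs!j)"
      using v2 j assms unfolding valid_def by auto
    show "strict_mono_on {..<k1+k2} (\<pi> j)"
    proof (rule strict_mono_onI)
      fix a b assume a: "a \<in> {..<k1+k2}" and b: "b \<in> {..<k1+k2}" and ab: "a < b"
      show "\<pi> j a < \<pi> j b"
      proof (cases "b < k1")
        case True then show ?thesis using ab sm1 unfolding \<pi>_def strict_mono_on_def by auto
      next
        case False
        show ?thesis
        proof (cases "a < k1")
          case True then show ?thesis using False b1 unfolding \<pi>_def by auto
        next
          case F2: False
          have "a - k1 < k2" "b - k1 < k2" "a - k1 < b - k1" using F2 False a b ab by auto
          then have "\<pi>2 j (a - k1) < \<pi>2 j (b - k1)" using sm2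
            unfolding strict_mono_on_def by auto
          then show ?thesis using False F2 unfolding \<pi>_def by auto
        qed
      qed
    qed
    fix i assume "i < k1+k2"
    then show "\<pi> j i < length (ws ! j)"
      using b1 b2 j unfolding \<pi>_def ws_def by (auto)
  qed
  have "score S ws (k1+k2) \<pi> = score S us k1 \<pi>1 + score S vs k2 \<pi>2"
  proof -
    have "score S ws (k1+k2) \<pi> = (\<Sum>i<k1. S (map (\<lambda>j. (ws ! j) ! (\<pi> j i)) [0..<n]))
            + (\<Sum>i<k2. S (map (\<lambda>j. (ws ! j) ! (\<pi> j (k1+i))) [0..<n]))"
      unfolding score_def lw by (simp add: sum_lt_add)
    also have "(\<Sum>i<k1. S (map (\<lambda>j. (ws ! j) ! (\<pi> j i)) [0..<n])) = score S us k1 \<pi>1"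
      unfolding score_def assms(1)
      apply (intro sum.cong refl arg_cong[where f=S] map_cong)
      using v1 assms unfolding valid_def ws_def \<pi>_def by (auto simp: nth_append)
    also have "(\<Sum>i<k2. S (map (\<lambda>j. (ws ! j) ! (\<pi> j (k1+i))) [0..<n])) = score S vs k2 \<pi>2"
      unfolding score_def assms(2)
      apply (intro sum.cong refl arg_cong[where f=S] map_cong)
      using v2 assms unfolding valid_def ws_def \<pi>_def by (auto simp: nth_append)
    finally show ?thesis .
  qed
  then show ?thesis using opt_ge[OF _ v, of S] lw assms o1 o2 unfolding ws_def by simp
qed

lemma mset_rotate1': "mset (rotate1 xs) = mset xs" by (cases xs) auto
lemma mset_rotate': "mset (rotate r xs) = mset xs"
  by (induct r) (simp_all add: mset_rotate1')

lemma opt_rotate: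
  assumes sym: "\<And>xs ys. length xs = m \<Longrightarrow> set xs \<subseteq> A \<Longrightarrow> mset ys = mset xs \<Longrightarrow> S ys = S xs"
    and l: "length ws = m" and m: "0 < m" and lA: "\<forall>j<m. set (ws!j) \<subseteq> A"
  shows "opt_score S ws \<le> opt_score S (rotate r ws)"
proof -
  obtain k \<pi> where v: "valid ws k \<pi>" and o: "opt_score S ws = score S ws k \<pi>"
    using opt_attained l m by metis
  define \<pi>' where "\<pi>' = (\<lambda>j. \<pi> ((r + j) mod m))"
  have lr: "length (rotate r ws) = m" using l by simp
  have v': "valid (rotate r ws) k \<pi>'"
    unfolding valid_def lr
  proof (intro allI impI)
    fix j assume j: "j < m"
    have "(r + j) mod m < m" using m by simp
    then show "strict_mono_on {..<k} (\<pi>' j) \<and> (\<forall>i<k. \<pi>' j i < length (rotate r ws ! j))"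
      using v j l unfolding valid_def \<pi>'_def by (simp add: nth_rotate)
  qed
  have "score S (rotate r ws) k \<pi>' = score S ws k \<pi>"
    unfolding score_def lr l
  proof (intro sum.cong refl)
    fix i assume i: "i \<in> {..<k}"
    define c where "c = map (\<lambda>j. (ws ! j) ! (\<pi> j i)) [0..<m]"
    have e: "map (\<lambda>j. (rotate r ws ! j) ! (\<pi>' j i)) [0..<m] = rotate r c"
      by (rule nth_equalityI) (auto simp: c_def \<pi>'_def nth_rotate l m)
    have "set c \<subseteq> A"
    proof
      fix a assume "a \<in> set c"
      then obtain j where j: "j < m" and a: "a = ws!j!\<pi> j i" unfolding c_def by auto
      have "\<pi> j i < length (ws!j)" using v i j l unfolding valid_def by auto
      then show "a \<in> A" using lA j a nth_mem by blast
    qed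
    then show "S (map (\<lambda>j. (rotate r ws ! j) ! (\<pi>' j i)) [0..<m]) = S (map (\<lambda>j. (ws ! j) ! (\<pi> j i)) [0..<m])"
      unfolding e c_def[symmetric] by (intro sym) (auto simp: c_def[symmetric] mset_rotate', simp add: c_def)
  qed
  moreover have "0 < length (rotate r ws)" using lr m by simp
  ultimately show ?thesis using opt_ge[OF _ v', of S] o by simp
qed




lemma chunk_exists:
  fixes t :: "nat \<Rightarrow> real" and R k :: nat
  assumes tb: "\<forall>i<k. 0 \<le> t i \<and> t i \<le> s" and tot: "real R * x \<le> (\<Sum>i<k. t i)"
    and s0: "0 \<le> s" and sx: "s < x"
  shows "\<exists>a. a 0 = 0 \<and> (\<forall>r<R. a r < a (Suc r)) \<and> a R \<le> k \<and>
           (\<forall>r<R. x - s \<le> (\<Sum>i\<in>{a r..<a (Suc r)}. t i))"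
proof -
  define P where "P c = (\<Sum>i<c. t i)" for c
  have x0: "0 < x" using s0 sx by simp
  have Pmono: "P c \<le> P d" if "c \<le> d" "d \<le> k" for c d
    unfolding P_def using that tb by (intro sum_mono2) auto
  have Psplit: "P d = P c + (\<Sum>i\<in>{c..<d}. t i)" if "c \<le> d" for c d
  proof -
    have u: "{..<d} = {..<c} \<union> {c..<d}" using that by auto
    show ?thesis unfolding P_def u by (subst sum.union_disjoint) auto
  qed
  define a where "a r = (if r = 0 then 0 else LEAST c. real r * x \<le> P c)" for r
  have ex: "real r * x \<le> P k" if "r \<le> R" for r
  proof -
    have "real r * x \<le> real R * x" using that x0 by (intro mult_right_mono) auto
    then show ?thesis using tot P_def by simp
  qed
  have low: "real r * x \<le> P (a r)" if "r \<le> R" for r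
  proof (cases "r = 0")
    case True then show ?thesis by (simp add: a_def P_def)
  next
    case False then show ?thesis unfolding a_def using LeastI[of "\<lambda>c. real r * x \<le> P c", OF ex[OF that]] by simp
  qed
  have ak: "a r \<le> k" if "r \<le> R" for r
  proof (cases "r = 0")
    case True then show ?thesis by (simp add: a_def)
  next
    case False then show ?thesis unfolding a_def using Least_le[of "\<lambda>c. real r * x \<le> P c", OF ex[OF that]] by simp
  qed
  have up: "P (a r) \<le> real r * x + s" if "r \<le> R" for r
  proof (cases "r = 0")
    case True then show ?thesis by (simp add: a_def P_def s0)
  next
    case False
    have "a r \<noteq> 0"
    proof
      assume "a r = 0"
      then have "real r * x \<le> 0" using low[OF that] by (simp add: P_def)
      then show False using False x0 by (simp add: mult_le_0_iff)
    qed
    then obtain b where b: "a r = Suc b" using not0_implies_Suc by blast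
    have "\<not> real r * x \<le> P b"
      using not_less_Least[of b "\<lambda>c. real r * x \<le> P c"] b False unfolding a_def by simp
    moreover have "P (a r) = P b + t b" unfolding b P_def by simp
    moreover have "t b \<le> s" using tb ak[OF that] b by simp
    ultimately show ?thesis by simp
  qed
  have step: "x - s \<le> P (a (Suc r)) - P (a r)" if "r < R" for r
    using low[of "Suc r"] up[of r] that by (simp add: algebra_simps)
  have inc: "a r < a (Suc r)" if "r < R" for r
  proof (rule ccontr)
    assume "\<not> a r < a (Suc r)"
    then have "P (a (Suc r)) \<le> P (a r)" using Pmono ak that by simp
    then show False using step[OF that] sx by simp
  qed
  show ?thesis
  proof (intro exI conjI allI impI)
    show "a 0 = 0" by (simp add: a_def)
    show "a R \<le> k" using ak by simp
    fix r assume r: "r < R"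
    show "a r < a (Suc r)" using inc r .
    show "x - s \<le> (\<Sum>i\<in>{a r..<a (Suc r)}. t i)"
      using step[OF r] Psplit[of "a r" "a (Suc r)"] inc[OF r] by simp
  qed
qed

lemma chain_less:
  fixes a :: "nat \<Rightarrow> nat"
  assumes "\<forall>r<R. a r < a (Suc r)" "r < r'" "r' \<le> R"
  shows "a r < a r'"
  using assms(2,3)
proof (induction r')
  case 0 then show ?case by simp
next
  case (Suc r')
  have "a r' < a (Suc r')" using assms(1) Suc.prems by simp
  then show ?case using Suc by (cases "r = r'") auto
qed




lemma inclusion:
  assumes lws: "length ws = m" and m0: "0 < m" and lenN: "\<forall>j<m. length (ws!j) = m*m*n"
    and Sb: "\<forall>xs. length xs = m \<longrightarrow> set xs \<subseteq> A \<longrightarrow> 0 \<le> S xs \<and> S xs \<le> s"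
    and wA: "\<forall>j<m. set (ws!j) \<subseteq> A"
    and big: "real (m*m) * x \<le> opt_score S ws" and s0: "0 \<le> s" and sx: "s < x"
  shows "\<exists>st ln. (\<forall>j<m. 1 \<le> ln j \<and> st j + ln j \<le> m*m*n) \<and> (\<Sum>j<m. ln j) \<le> m*n \<and>
            x - s \<le> opt_score S (map (\<lambda>j. map (\<lambda>i. ws!j!(st j + i)) [0..<ln j]) [0..<m])"
proof -
  define N where "N = m*m*n"
  define R where "R = m*m"
  have R0: "0 < R" using m0 by (simp add: R_def)
  obtain k \<pi> where v: "valid ws k \<pi>" and o: "opt_score S ws = score S ws k \<pi>"
    using opt_attained lws m0 by metis
  have sm: "strict_mono_on {..<k} (\<pi> j)" and bd: "\<forall>i<k. \<pi> j i < N" if "j < m" for j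
    using v that lws lenN unfolding valid_def N_def by auto
  define t where "t i = S (map (\<lambda>j. ws!j!\<pi> j i) [0..<m])" for i
  have tb: "\<forall>i<k. 0 \<le> t i \<and> t i \<le> s"
  proof (intro allI impI)
    fix i assume i: "i < k"
    have "set (map (\<lambda>j. ws!j!\<pi> j i) [0..<m]) \<subseteq> A"
      using wA bd i lenN unfolding N_def by (auto intro!: nth_mem[THEN subsetD[rotated]])
    then show "0 \<le> t i \<and> t i \<le> s" using Sb unfolding t_def by simp
  qed
  have tot: "real R * x \<le> (\<Sum>i<k. t i)" using big o unfolding score_def t_def R_def lws by simp
  obtain a where a0: "a 0 = 0" and inc: "\<forall>r<R. a r < a (Suc r)" and aR: "a R \<le> k"
    and ch: "\<forall>r<R. x - s \<le> (\<Sum>i\<in>{a r..<a (Suc r)}. t i)"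
    using chunk_exists[OF tb tot s0 sx] by blast
  have aSk: "a (Suc r) \<le> k" if "r < R" for r
  proof (cases "Suc r = R")
    case True then show ?thesis using aR by simp
  next
    case False then show ?thesis using chain_less[OF inc, of "Suc r" R] that aR by simp
  qed
  define sp where "sp r j = \<pi> j (a (Suc r) - 1) + 1 - \<pi> j (a r)" for r j
  have le1: "\<pi> j (a r) \<le> \<pi> j (a (Suc r) - 1)" if "r < R" "j < m" for r j
  proof -
    have "a r \<le> a (Suc r) - 1" "a (Suc r) - 1 < k" using inc aSk that by force+
    then show ?thesis using sm[OF that(2)] by (auto intro: strict_mono_on_leD)
  qed
  have colsum: "(\<Sum>r<R. sp r j) \<le> N" if j: "j < m" for j
  proof -
    define e where "e r = (if r < R then \<pi> j (a r) else N)" for r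
    have "R' \<le> R \<Longrightarrow> (\<Sum>r<R'. sp r j) + e 0 \<le> e R'" for R'
    proof (induction R')
      case 0 then show ?case by simp
    next
      case (Suc R')
      have R': "R' < R" using Suc by simp
      have "sp R' j + e R' = \<pi> j (a (Suc R') - 1) + 1"
        using le1[OF R' j] R' unfolding sp_def e_def by simp
      also have "\<dots> \<le> e (Suc R')"
      proof (cases "Suc R' < R")
        case True
        have i1: "a R' < a (Suc R')" "a (Suc R') < a (Suc (Suc R'))" using inc True R' by auto
        have "a (Suc R') - 1 < a (Suc R')" "a (Suc R') < k"
          using i1 aSk[OF True] by linarith+
        then have "\<pi> j (a (Suc R') - 1) < \<pi> j (a (Suc R'))"
          using sm[OF j] by (auto simp: strict_mono_on_def)
        then show ?thesis using True unfolding e_def by simp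
      next
        case False
        have "a (Suc R') - 1 < k" using inc aSk R' by force
        then show ?thesis using bd[OF j] False unfolding e_def by force
      qed
      finally show ?case using Suc by simp
    qed
    from this[of R] show ?thesis unfolding e_def by simp
  qed
  have "\<exists>r<R. (\<Sum>j<m. sp r j) \<le> m*n"
  proof (rule ccontr)
    assume "\<not> ?thesis"
    then have "\<forall>r<R. m*n + 1 \<le> (\<Sum>j<m. sp r j)" by auto
    then have "R * (m*n+1) \<le> (\<Sum>r<R. \<Sum>j<m. sp r j)"
      using sum_bounded_below[of "{..<R}" "m*n+1" "\<lambda>r. \<Sum>j<m. sp r j"] by simp
    also have "\<dots> = (\<Sum>j<m. \<Sum>r<R. sp r j)" by (rule sum.swap)
    also have "\<dots> \<le> m * N" using sum_bounded_above[of "{..<m}" "\<lambda>j. \<Sum>r<R. sp r j" N] colsum by simp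
    finally show False unfolding R_def N_def using m0 by (simp add: algebra_simps)
  qed
  then obtain r where r: "r < R" and spr: "(\<Sum>j<m. sp r j) \<le> m*n" by blast
  define st where "st j = \<pi> j (a r)" for j
  define ln where "ln j = sp r j" for j
  define k' where "k' = a (Suc r) - a r"
  define \<pi>' where "\<pi>' j i = \<pi> j (a r + i) - st j" for j i
  define sub where "sub = map (\<lambda>j. map (\<lambda>i. ws!j!(st j + i)) [0..<ln j]) [0..<m]"
  have ak': "a (Suc r) = a r + k'" using inc r unfolding k'_def by force
  have lsub: "length sub = m" unfolding sub_def by simp
  have mono_in: "\<pi> j (a r) \<le> \<pi> j (a r + i)" "\<pi> j (a r + i) \<le> \<pi> j (a (Suc r) - 1)"
    if "j < m" "i < k'" for j i
  proof -
    have h: "a r + i < k" "a (Suc r) - 1 < k" "a r < k" "a r + i \<le> a (Suc r) - 1"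
      using aSk[OF r] ak' that by auto
    show "\<pi> j (a r) \<le> \<pi> j (a r + i)"
      by (rule strict_mono_on_leD[OF sm[OF that(1)]]) (use h in auto)
    show "\<pi> j (a r + i) \<le> \<pi> j (a (Suc r) - 1)"
      by (rule strict_mono_on_leD[OF sm[OF that(1)]]) (use h in auto)
  qed
  have vs: "valid sub k' \<pi>'"
    unfolding valid_def lsub
  proof (intro allI impI conjI)
    fix j assume j: "j < m"
    show "strict_mono_on {..<k'} (\<pi>' j)"
    proof (rule strict_mono_onI)
      fix i i' assume ii: "i \<in> {..<k'}" "i' \<in> {..<k'}" "i < i'"
      moreover have "a r + i' < k" using aSk[OF r] ak' calculation by auto
      ultimately have "\<pi> j (a r + i) < \<pi> j (a r + i')" using sm[OF j] by (auto simp: strict_mono_on_def)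
      then show "\<pi>' j i < \<pi>' j i'" unfolding \<pi>'_def st_def using mono_in[OF j, of i] mono_in[OF j, of i'] ii by force
    qed
  next
    fix j i assume j: "j < m" and i: "i < k'"
    show "\<pi>' j i < length (sub ! j)"
      using mono_in[OF j i] le1[OF r j] j unfolding sub_def \<pi>'_def st_def ln_def sp_def by auto
  qed
  have "score S sub k' \<pi>' = (\<Sum>i<k'. t (a r + i))"
    unfolding score_def lsub t_def
  proof (intro sum.cong refl arg_cong[where f=S] map_cong)
    fix i j assume i: "i \<in> {..<k'}" and j: "j \<in> set [0..<m]"
    have "\<pi>' j i < ln j"
      using mono_in[of j i] le1[OF r, of j] i j unfolding \<pi>'_def st_def ln_def sp_def by auto
    then show "sub ! j ! \<pi>' j i = ws ! j ! \<pi> j (a r + i)"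
      using j mono_in[of j i] i unfolding sub_def \<pi>'_def by (auto simp: st_def)
  qed
  also have "\<dots> = (\<Sum>i\<in>{a r..<a (Suc r)}. t i)" unfolding ak' sum_ivl_shift ..
  finally have "x - s \<le> score S sub k' \<pi>'" using ch r by simp
  also have "\<dots> \<le> opt_score S sub" using opt_ge[OF _ vs] lsub m0 by simp
  finally have fin: "x - s \<le> opt_score S sub" .
  show ?thesis
  proof (intro exI conjI allI impI)
    show "(\<Sum>j<m. ln j) \<le> m*n" using spr unfolding ln_def .
    show "x - s \<le> opt_score S (map (\<lambda>j. map (\<lambda>i. ws!j!(st j + i)) [0..<ln j]) [0..<m])"
      using fin unfolding sub_def .
    fix j assume j: "j < m"
    show "1 \<le> ln j" using le1[OF r j] unfolding ln_def sp_def by simp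
    have "a (Suc r) - 1 < k" using aSk[OF r] inc r by force
    then show "st j + ln j \<le> m*m*n" using le1[OF r j] bd[OF j] unfolding ln_def sp_def st_def N_def by force
  qed
qed




definition wdsY :: "(nat \<times> nat \<Rightarrow> real) \<Rightarrow> (nat \<Rightarrow> nat \<Rightarrow> nat \<times> nat) \<Rightarrow> (nat \<Rightarrow> nat) \<Rightarrow> nat \<Rightarrow> real list list" where
  "wdsY Z pos lw m = map (\<lambda>j. map (\<lambda>i. Z (pos j i)) [0..<lw j]) [0..<m]"

lemma length_wdsY[simp]: "length (wdsY Z pos lw m) = m" by (simp add: wdsY_def)
lemma nth_wdsY: "j < m \<Longrightarrow> wdsY Z pos lw m ! j = map (\<lambda>i. Z (pos j i)) [0..<lw j]"
  by (simp add: wdsY_def)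

locale ctx = prob_space M for M :: "'w measure" +
  fixes m :: nat and A :: "real set" and X :: "nat \<Rightarrow> nat \<Rightarrow> 'w \<Rightarrow> real"
  assumes m2: "m \<ge> 2" and finA: "finite A"
    and Xmeas: "\<And>i j. i \<ge> 1 \<Longrightarrow> j \<in> {1..m} \<Longrightarrow> X i j \<in> borel_measurable M"
    and XA: "\<And>i j \<omega>. i \<ge> 1 \<Longrightarrow> j \<in> {1..m} \<Longrightarrow> \<omega> \<in> space M \<Longrightarrow> X i j \<omega> \<in> A"
    and indep: "indep_vars (\<lambda>_. borel) (\<lambda>(i, j). X i j) ({1..} \<times> {1..m})"
    and ident: "\<And>i j. i \<ge> 1 \<Longrightarrow> j \<in> {1..m} \<Longrightarrow> distr M borel (X i j) = distr M borel (X 1 1)"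
begin

definition Pos :: "(nat \<times> nat) set" where "Pos = {1..} \<times> {1..m}"
definition Y :: "nat \<times> nat \<Rightarrow> 'w \<Rightarrow> real" where "Y q = X (fst q) (snd q)"

lemma indepY: "indep_vars (\<lambda>_. borel) Y Pos"
proof -
  have "(\<lambda>(i, j). X i j) = Y" by (auto simp: Y_def fun_eq_iff)
  then show ?thesis using indep by (simp add: Pos_def)
qed

lemma YA: "q \<in> Pos \<Longrightarrow> \<omega> \<in> space M \<Longrightarrow> Y q \<omega> \<in> A"
  using XA by (auto simp: Pos_def Y_def)

lemma Ymeas: "q \<in> Pos \<Longrightarrow> Y q \<in> borel_measurable M"
  using Xmeas by (auto simp: Pos_def Y_def)

definition p :: "real \<Rightarrow> real" where "p a = prob (X 1 1 -` {a} \<inter> space M)"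

lemma prob_Y: assumes "q \<in> Pos" shows "prob (Y q -` {a} \<inter> space M) = p a"
proof -
  have q: "fst q \<ge> 1" "snd q \<in> {1..m}" using assms by (auto simp: Pos_def)
  have m1: "1 \<in> {1..m}" using m2 by simp
  have "prob (Y q -` {a} \<inter> space M) = measure (distr M borel (Y q)) {a}"
    by (rule measure_distr[symmetric]) (use Ymeas[OF assms] in auto)
  also have "\<dots> = measure (distr M borel (X 1 1)) {a}"
    using ident[OF q] by (simp add: Y_def)
  also have "\<dots> = p a" unfolding p_def
    by (rule measure_distr) (use Xmeas[OF _ m1] in auto)
  finally show ?thesis .
qed

definition Wds :: "(nat \<Rightarrow> nat) \<Rightarrow> real list list set" where
  "Wds lw = {ws. length ws = m \<and> (\<forall>j<m. length (ws!j) = lw j \<and> set (ws!j) \<subseteq> A)}"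

definition wt :: "real list list \<Rightarrow> real" where
  "wt ws = (\<Prod>j<length ws. \<Prod>i<length (ws!j). p (ws!j!i))"

definition good :: "(nat \<Rightarrow> nat \<Rightarrow> nat \<times> nat) \<Rightarrow> (nat \<Rightarrow> nat) \<Rightarrow> bool" where
  "good pos lw \<longleftrightarrow> inj_on (\<lambda>(j,i). pos j i) (SIGMA j:{..<m}. {..<lw j}) \<and> (\<forall>j<m. \<forall>i<lw j. pos j i \<in> Pos)"

lemma finite_Wds: "finite (Wds lw)"
proof -
  define K where "K = (\<Sum>j<m. lw j)"
  have le: "lw j \<le> K" if "j < m" for j
    unfolding K_def using that by (intro member_le_sum) auto
  have "Wds lw \<subseteq> {ws. set ws \<subseteq> {w. set w \<subseteq> A \<and> length w \<le> K} \<and> length ws = m}"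
  proof
    fix ws assume ws: "ws \<in> Wds lw"
    show "ws \<in> {ws. set ws \<subseteq> {w. set w \<subseteq> A \<and> length w \<le> K} \<and> length ws = m}"
      using ws le unfolding Wds_def by (auto simp: in_set_conv_nth) (metis nth_mem subsetD)
  qed
  moreover have "finite {ws. set ws \<subseteq> {w. set w \<subseteq> A \<and> length w \<le> K} \<and> length ws = m}"
    by (intro finite_lists_length_eq finite_lists_length_le finA)
  ultimately show ?thesis by (rule finite_subset)
qed

lemma wds_in: "good pos lw \<Longrightarrow> \<omega> \<in> space M \<Longrightarrow> wdsY (\<lambda>q. Y q \<omega>) pos lw m \<in> Wds lw"
  unfolding Wds_def good_def by (auto simp: nth_wdsY intro!: YA)

lemma wds_eq_iff:
  assumes "ws \<in> Wds lw"
  shows "wdsY Z pos lw m = ws \<longleftrightarrow> (\<forall>j<m. \<forall>i<lw j. Z (pos j i) = ws!j!i)"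
  using assms unfolding Wds_def by (auto simp: list_eq_iff_nth_eq nth_wdsY)

lemma INV:
  assumes g: "good pos lw"
  shows "{\<omega>\<in>space M. \<Phi> (wdsY (\<lambda>q. Y q \<omega>) pos lw m)} \<in> events"
    and "prob {\<omega>\<in>space M. \<Phi> (wdsY (\<lambda>q. Y q \<omega>) pos lw m)} = (\<Sum>ws\<in>{ws\<in>Wds lw. \<Phi> ws}. wt ws)"
proof -
  define D where "D = (SIGMA j:{..<m}. {..<lw j})"
  define f where "f = (\<lambda>(j,i). pos j i)"
  have inj: "inj_on f D" and inP: "\<And>d. d \<in> D \<Longrightarrow> f d \<in> Pos"
    using g unfolding good_def D_def f_def by auto
  have finD: "finite D" unfolding D_def by auto
  define W where "W \<omega> = wdsY (\<lambda>q. Y q \<omega>) pos lw m" for \<omega>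
  define E where "E ws = {\<omega>\<in>space M. W \<omega> = ws}" for ws
  have eqE: "E ws = {\<omega>\<in>space M. \<forall>d\<in>D. Y (f d) \<omega> = ws ! fst d ! snd d}" if "ws \<in> Wds lw" for ws
    unfolding E_def W_def wds_eq_iff[OF that] D_def f_def by auto
  have ev1: "{\<omega>\<in>space M. Y q \<omega> = c} \<in> events" if "q \<in> Pos" for q c
  proof -
    have "{\<omega>\<in>space M. Y q \<omega> = c} = Y q -` {c} \<inter> space M" by auto
    then show ?thesis using measurable_sets[OF Ymeas[OF that], of "{c}"] by simp
  qed
  have evE: "E ws \<in> events" if "ws \<in> Wds lw" for ws
    unfolding eqE[OF that]
    by (rule sets.sets_Collect_finite_All) (use ev1 inP finD in auto)
  have wtD: "wt ws = (\<Prod>d\<in>D. p (ws ! fst d ! snd d))" if "ws \<in> Wds lw" for ws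
  proof -
    have "wt ws = (\<Prod>j<m. \<Prod>i<lw j. p (ws!j!i))"
      using that unfolding wt_def Wds_def by (auto intro!: prod.cong)
    also have "\<dots> = (\<Prod>d\<in>D. p (ws ! fst d ! snd d))"
      unfolding D_def by (subst prod.Sigma) (auto simp: case_prod_beta)
    finally show ?thesis .
  qed
  have prE: "prob (E ws) = wt ws" if ws: "ws \<in> Wds lw" for ws
  proof (cases "D = {}")
    case True
    then show ?thesis unfolding eqE[OF ws] wtD[OF ws] by (simp add: prob_space)
  next
    case False
    define J where "J = f ` D"
    define val where "val q = (let d = the_inv_into D f q in ws ! fst d ! snd d)" for q
    define B where "B q = Y q -` {val q} \<inter> space M" for q
    have valf: "val (f d) = ws ! fst d ! snd d" if "d \<in> D" for d
      unfolding val_def using the_inv_into_f_f[OF inj that] by simp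
    have "E ws = (\<Inter>q\<in>J. B q)"
    proof
      show "E ws \<subseteq> (\<Inter>q\<in>J. B q)"
        unfolding eqE[OF ws] J_def B_def using valf by auto
      show "(\<Inter>q\<in>J. B q) \<subseteq> E ws"
      proof
        fix \<omega> assume h: "\<omega> \<in> (\<Inter>q\<in>J. B q)"
        obtain d0 where "d0 \<in> D" using False by auto
        then have "\<omega> \<in> space M" using h False unfolding J_def B_def by auto
        then show "\<omega> \<in> E ws" unfolding eqE[OF ws] using h valf False unfolding J_def B_def by auto
      qed
    qed
    moreover have "prob (\<Inter>q\<in>J. B q) = (\<Prod>q\<in>J. prob (B q))"
    proof (rule indep_setsD)
      show "indep_sets (\<lambda>i. {Y i -` A \<inter> space M |A. A \<in> sets borel}) Pos"
        using indepY unfolding indep_vars_def2 by simp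
      show "J \<subseteq> Pos" "J \<noteq> {}" "finite J" using inP False finD unfolding J_def by auto
      show "\<forall>j\<in>J. B j \<in> {Y j -` A \<inter> space M |A. A \<in> sets borel}" unfolding B_def by auto
    qed
    moreover have "(\<Prod>q\<in>J. prob (B q)) = (\<Prod>d\<in>D. p (ws ! fst d ! snd d))"
    proof -
      have "(\<Prod>q\<in>J. prob (B q)) = (\<Prod>d\<in>D. prob (B (f d)))"
        unfolding J_def by (rule prod.reindex[OF inj, unfolded comp_def])
      also have "\<dots> = (\<Prod>d\<in>D. p (ws ! fst d ! snd d))"
        by (intro prod.cong refl) (simp add: B_def prob_Y inP valf)
      finally show ?thesis .
    qed
    ultimately show ?thesis using wtD[OF ws] by simp
  qed
  have un: "{\<omega>\<in>space M. \<Phi> (W \<omega>)} = (\<Union>ws\<in>{ws\<in>Wds lw. \<Phi> ws}. E ws)"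
    unfolding E_def using wds_in[OF g] W_def by auto
  have finW: "finite {ws\<in>Wds lw. \<Phi> ws}" using finite_Wds by auto
  show "{\<omega>\<in>space M. \<Phi> (wdsY (\<lambda>q. Y q \<omega>) pos lw m)} \<in> events"
    using un evE finW unfolding W_def by (auto intro!: sets.finite_UN)
  have "prob (\<Union>ws\<in>{ws\<in>Wds lw. \<Phi> ws}. E ws) = (\<Sum>ws\<in>{ws\<in>Wds lw. \<Phi> ws}. prob (E ws))"
    by (rule finite_measure_finite_Union) (use finW evE in \<open>auto simp: disjoint_family_on_def E_def\<close>)
  then show "prob {\<omega>\<in>space M. \<Phi> (wdsY (\<lambda>q. Y q \<omega>) pos lw m)} = (\<Sum>ws\<in>{ws\<in>Wds lw. \<Phi> ws}. wt ws)"
    using un prE unfolding W_def by simp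
qed

end



lemma modlem: "r < (m::nat) \<Longrightarrow> k < m \<Longrightarrow> ((r + k) mod m + m - k) mod m = r"
  by (cases "r + k < m") (auto simp: mod_if)
lemma modinj: "(r + a) mod (m::nat) = (r + b) mod m \<Longrightarrow> a < m \<Longrightarrow> b < m \<Longrightarrow> a = b"
proof -
  assume h: "(r + a) mod m = (r + b) mod m" "a < m" "b < m"
  have rm: "r mod m < m" using h by simp
  have e: "(r + c) mod m = (c + r mod m) mod m" for c by (simp add: mod_add_right_eq add.commute)
  have "a = ((a + r mod m) mod m + m - r mod m) mod m" using modlem[OF h(2) rm] by simp
  also have "\<dots> = ((b + r mod m) mod m + m - r mod m) mod m" using h(1) e by metis
  also have "\<dots> = b" using modlem[OF h(3) rm] by simp
  finally show ?thesis .
qed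
lemma modlem2: "j < (m::nat) \<Longrightarrow> k < m \<Longrightarrow> ((j + m - k) mod m + k) mod m = j"
  by (simp add: add.commute mod_add_right_eq)

definition off :: "(nat \<Rightarrow> nat) \<Rightarrow> nat \<Rightarrow> nat \<Rightarrow> nat \<Rightarrow> nat" where
  "off lw m k r = (\<Sum>k'<k. lw ((r + k') mod m))"

definition posk :: "(nat \<Rightarrow> nat) \<Rightarrow> nat \<Rightarrow> nat \<Rightarrow> nat \<Rightarrow> nat \<Rightarrow> nat \<times> nat" where
  "posk lw m k = (\<lambda>j i. (off lw m k ((j + m - k) mod m) + i + 1, (j + m - k) mod m + 1))"

lemma off_full: assumes "r < m" shows "off lw m m r = (\<Sum>j<m. lw j)"
proof -
  have inj: "inj_on (\<lambda>k'. (r + k') mod m) {..<m}"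
    by (auto simp: inj_on_def intro: modinj)
  have img: "(\<lambda>k'. (r + k') mod m) ` {..<m} = {..<m}"
    by (rule endo_inj_surj) (use inj assms in auto)
  have "(\<Sum>j<m. lw j) = (\<Sum>j\<in>(\<lambda>k'. (r + k') mod m) ` {..<m}. lw j)" using img by simp
  also have "\<dots> = off lw m m r" unfolding off_def by (subst sum.reindex[OF inj]) simp
  finally show ?thesis by simp
qed

lemma combine:
  assumes m0: "0 < m"
    and sym: "\<And>xs ys. length xs = m \<Longrightarrow> set xs \<subseteq> A \<Longrightarrow> mset ys = mset xs \<Longrightarrow> S ys = S xs"
    and ZA: "\<forall>i r. r < m \<longrightarrow> Z (Suc i, Suc r) \<in> A"
    and sumle: "(\<Sum>j<m. lw j) \<le> N'"
    and each: "\<forall>k<m. t \<le> opt_score S (wdsY Z (posk lw m k) lw m)"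
  shows "real m * t \<le> opt_score S (wdsY Z (\<lambda>j i. (i+1, j+1)) (\<lambda>_. N') m)"
proof -
  define P where "P k = wdsY Z (\<lambda>j i. (i+1, j+1)) (\<lambda>r. off lw m k r) m" for k
  define R where "R k = wdsY Z (\<lambda>r i. (off lw m k r + i + 1, r+1)) (\<lambda>r. lw ((r+k) mod m)) m" for k
  define W where "W k = wdsY Z (posk lw m k) lw m" for k
  have RW: "R k = rotate k (W k)" if k: "k < m" for k
  proof (rule nth_equalityI)
    show "length (R k) = length (rotate k (W k))" by (simp add: R_def W_def)
    fix r assume "r < length (R k)"
    then have r: "r < m" by (simp add: R_def)
    have jm: "(k + r) mod m < m" using m0 by simp
    have e: "((k + r) mod m + m - k) mod m = r" using modlem[OF r k] by (simp add: add.commute)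
    have e': "(m + (k + r) mod m - k) mod m = r" using e by (simp add: add.commute)
    show "R k ! r = rotate k (W k) ! r"
      using r jm by (simp add: R_def W_def nth_rotate nth_wdsY posk_def e' add.commute)
  qed
  have WA: "\<forall>j<m. set (W k ! j) \<subseteq> A" for k
    using ZA m0 by (auto simp: W_def nth_wdsY posk_def)
  have PS: "P (Suc k) = map (\<lambda>r. P k ! r @ R k ! r) [0..<m]" for k
  proof (rule nth_equalityI)
    show "length (P (Suc k)) = length (map (\<lambda>r. P k ! r @ R k ! r) [0..<m])" by (simp add: P_def)
    fix r assume "r < length (P (Suc k))"
    then have r: "r < m" by (simp add: P_def)
    have o: "off lw m (Suc k) r = off lw m k r + lw ((r + k) mod m)" by (simp add: off_def)
    show "P (Suc k) ! r = map (\<lambda>r. P k ! r @ R k ! r) [0..<m] ! r"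
      using r by (simp add: P_def R_def nth_wdsY o upt_add_eq_append[of 0] map_upt_shift add.assoc)
  qed
  have ind: "real k * t \<le> opt_score S (P k)" if "k \<le> m" for k
    using that
  proof (induction k)
    case 0
    show ?case using opt_nonneg[of "P 0" S] m0 by (simp add: P_def)
  next
    case (Suc k)
    have k: "k < m" using Suc by simp
    have lW: "length (W k) = m" unfolding W_def by simp
    have "t \<le> opt_score S (W k)" using each k by (simp add: W_def)
    also have "\<dots> \<le> opt_score S (R k)" unfolding RW[OF k]
      by (rule opt_rotate[OF sym lW m0 WA])
    finally have "real k * t + t \<le> opt_score S (P k) + opt_score S (R k)" using Suc by simp
    also have "\<dots> \<le> opt_score S (P (Suc k))" unfolding PS
      by (rule opt_append) (auto simp: P_def R_def m0)
    finally show ?case by (simp add: algebra_simps)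
  qed
  define Rest where "Rest = wdsY Z (\<lambda>r i. (off lw m m r + i + 1, r+1)) (\<lambda>r. N' - off lw m m r) m"
  have T: "wdsY Z (\<lambda>j i. (i+1, j+1)) (\<lambda>_. N') m = map (\<lambda>r. P m ! r @ Rest ! r) [0..<m]"
  proof (rule nth_equalityI)
    show "length (wdsY Z (\<lambda>j i. (i+1, j+1)) (\<lambda>_. N') m) = length (map (\<lambda>r. P m ! r @ Rest ! r) [0..<m])" by simp
    fix r assume "r < length (wdsY Z (\<lambda>j i. (i+1, j+1)) (\<lambda>_. N') m)"
    then have r: "r < m" by simp
    have o: "N' = off lw m m r + (N' - off lw m m r)" using off_full[OF r] sumle by simp
    show "wdsY Z (\<lambda>j i. (i+1, j+1)) (\<lambda>_. N') m ! r = map (\<lambda>r. P m ! r @ Rest ! r) [0..<m] ! r"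
      using r apply (simp add: P_def Rest_def nth_wdsY)
      apply (subst o)
      apply (subst upt_add_eq_append[of 0], simp)
      by (simp only: map_append map_upt_shift)
  qed
  have "real m * t + 0 \<le> opt_score S (P m) + opt_score S Rest"
    using ind[of m] opt_nonneg[of Rest S] m0 by (simp add: Rest_def)
  also have "\<dots> \<le> opt_score S (wdsY Z (\<lambda>j i. (i+1, j+1)) (\<lambda>_. N') m)" unfolding T
    by (rule opt_append) (auto simp: P_def Rest_def m0)
  finally show ?thesis by simp
qed




context ctx begin

lemma indep_blocks:
  fixes K :: nat
  assumes K0: "0 < K" and g: "\<And>k. k < K \<Longrightarrow> good (pos k) lw"
    and disj: "\<And>k k' j i j' i'. k < K \<Longrightarrow> k' < K \<Longrightarrow> k \<noteq> k' \<Longrightarrow> j < m \<Longrightarrow> i < lw j \<Longrightarrow>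
                  j' < m \<Longrightarrow> i' < lw j' \<Longrightarrow> pos k j i \<noteq> pos k' j' i'"
  shows "prob (\<Inter>k<K. {\<omega>\<in>space M. \<Phi> (wdsY (\<lambda>q. Y q \<omega>) (pos k) lw m)})
         = (\<Prod>k<K. prob {\<omega>\<in>space M. \<Phi> (wdsY (\<lambda>q. Y q \<omega>) (pos k) lw m)})"
proof -
  define D where "D = (SIGMA j:{..<m}. {..<lw j})"
  define J where "J k = (\<lambda>(j,i). pos k j i) ` D" for k
  define Z where "Z k \<omega> = restrict (\<lambda>q. Y q \<omega>) (J k)" for k \<omega>
  define G where "G k = {v \<in> PiE (J k) (\<lambda>_. A). \<Phi> (wdsY v (pos k) lw m)}" for k
  have JP: "J k \<subseteq> Pos" if "k < K" for k using g[OF that] unfolding good_def J_def D_def by auto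
  have dis: "disjoint_family_on J {..<K}"
    unfolding disjoint_family_on_def J_def D_def using disj by fastforce
  have ind: "indep_vars (\<lambda>k. PiM (J k) (\<lambda>_. borel)) Z {..<K}"
    unfolding Z_def by (rule indep_vars_restrict[OF indepY]) (use JP dis in auto)
  then have ind2: "indep_sets (\<lambda>k. {Z k -` G' \<inter> space M | G'. G' \<in> sets (PiM (J k) (\<lambda>_. borel))}) {..<K}"
    unfolding indep_vars_def2 by simp
  have wZ: "wdsY (Z k \<omega>) (pos k) lw m = wdsY (\<lambda>q. Y q \<omega>) (pos k) lw m" for k \<omega>
    unfolding wdsY_def Z_def J_def D_def by (auto intro!: map_cong)
  have eqE: "{\<omega>\<in>space M. \<Phi> (wdsY (\<lambda>q. Y q \<omega>) (pos k) lw m)} = Z k -` G k \<inter> space M" if k: "k < K" for k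
  proof -
    have "Z k \<omega> \<in> PiE (J k) (\<lambda>_. A)" if "\<omega> \<in> space M" for \<omega>
      using JP[OF k] YA that unfolding Z_def by auto
    then show ?thesis unfolding G_def using wZ by auto
  qed
  have Gm: "G k \<in> sets (PiM (J k) (\<lambda>_. borel))" if k: "k < K" for k
  proof -
    have finJ: "finite (J k)" unfolding J_def D_def by auto
    have fin: "finite (G k)"
      by (rule finite_subset[of _ "PiE (J k) (\<lambda>_. A)"]) (auto simp: G_def intro!: finite_PiE finJ finA)
    have un: "G k = (\<Union>v\<in>G k. {v})" by auto
    have "{v} \<in> sets (PiM (J k) (\<lambda>_. borel))" if "v \<in> G k" for v
    proof -
      have "v \<in> extensional (J k)" using that unfolding G_def by (auto simp: PiE_def)
      then have "{v} = PiE (J k) (\<lambda>q. {v q})" by (rule PiE_singleton[symmetric])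
      then show ?thesis using finJ by (auto intro!: sets_PiM_I_finite)
    qed
    then show ?thesis using fin un by (metis sets.finite_UN)
  qed
  show ?thesis
  proof -
    have "prob (\<Inter>k\<in>{..<K}. {\<omega>\<in>space M. \<Phi> (wdsY (\<lambda>q. Y q \<omega>) (pos k) lw m)})
         = (\<Prod>k\<in>{..<K}. prob {\<omega>\<in>space M. \<Phi> (wdsY (\<lambda>q. Y q \<omega>) (pos k) lw m)})"
      apply (rule indep_setsD[OF ind2])
      subgoal by simp
      subgoal using K0 by auto
      subgoal by simp
      subgoal using eqE Gm by auto
      done
    then show ?thesis by simp
  qed
qed

lemma off_mono: "k1 \<le> k2 \<Longrightarrow> off lw m k1 r \<le> off lw m k2 r"
  unfolding off_def by (rule sum_mono2) auto

lemma posk_good: assumes k: "k < m" shows "good (posk lw m k) lw"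
  unfolding good_def
proof
  show "inj_on (\<lambda>(j, i). posk lw m k j i) (SIGMA j:{..<m}. {..<lw j})"
  proof (rule inj_onI, clarsimp)
    fix j i j' i' assume h: "j < m" "i < lw j" "j' < m" "i' < lw j'" "posk lw m k j i = posk lw m k j' i'"
    then have r: "(j + m - k) mod m = (j' + m - k) mod m" by (simp add: posk_def)
    have "j = ((j + m - k) mod m + k) mod m" using modlem2[OF h(1) k] by simp
    also have "\<dots> = ((j' + m - k) mod m + k) mod m" using r by simp
    also have "\<dots> = j'" using modlem2[OF h(3) k] by simp
    finally have "j = j'" .
    then show "j = j' \<and> i = i'" using h(5) by (simp add: posk_def)
  qed
  show "\<forall>j<m. \<forall>i<lw j. posk lw m k j i \<in> Pos"
    using m2 by (auto simp: posk_def Pos_def Suc_le_eq)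
qed

lemma posk_disj:
  assumes "k < m" "k' < m" "k \<noteq> k'" "j < m" "i < lw j" "j' < m" "i' < lw j'"
  shows "posk lw m k j i \<noteq> posk lw m k' j' i'"
proof
  assume eq: "posk lw m k j i = posk lw m k' j' i'"
  define r where "r = (j + m - k) mod m"
  have r': "(j' + m - k') mod m = r" using eq unfolding r_def by (simp add: posk_def)
  have jr: "j = (r + k) mod m" using modlem2[OF assms(4,1)] unfolding r_def by simp
  have jr': "j' = (r + k') mod m" using modlem2[OF assms(6,2)] r' by simp
  have f: "off lw m k r + i = off lw m k' r + i'" using eq r' unfolding r_def by (simp add: posk_def)
  show False
  proof (cases "k < k'")
    case True
    have "off lw m k r + lw j = off lw m (Suc k) r" by (simp add: off_def jr)
    also have "\<dots> \<le> off lw m k' r" using True by (intro off_mono) simp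
    finally show False using f assms(5) by simp
  next
    case False
    then have "k' < k" using assms(3) by simp
    have "off lw m k' r + lw j' = off lw m (Suc k') r" by (simp add: off_def jr')
    also have "\<dots> \<le> off lw m k r" using \<open>k' < k\<close> by (intro off_mono) simp
    finally show False using f assms(7) by simp
  qed
qed

lemma q_bound:
  assumes sym: "\<And>xs ys. length xs = m \<Longrightarrow> set xs \<subseteq> A \<Longrightarrow> mset ys = mset xs \<Longrightarrow> S ys = S xs"
    and g: "good pos lw" and sumle: "(\<Sum>j<m. lw j) \<le> N'"
  shows "(prob {\<omega>\<in>space M. t \<le> opt_score S (wdsY (\<lambda>q. Y q \<omega>) pos lw m)}) ^ m
         \<le> prob {\<omega>\<in>space M. real m * t \<le> opt_score S (wdsY (\<lambda>q. Y q \<omega>) (\<lambda>j i. (i+1, j+1)) (\<lambda>_. N') m)}"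
proof -
  have m0: "0 < m" using m2 by simp
  let ?E = "\<lambda>k. {\<omega>\<in>space M. t \<le> opt_score S (wdsY (\<lambda>q. Y q \<omega>) (posk lw m k) lw m)}"
  let ?B = "{\<omega>\<in>space M. real m * t \<le> opt_score S (wdsY (\<lambda>q. Y q \<omega>) (\<lambda>j i. (i+1, j+1)) (\<lambda>_. N') m)}"
  have gB: "good (\<lambda>j i. (i+1, j+1)) (\<lambda>_. N')"
    unfolding good_def Pos_def by (auto simp: inj_on_def)
  have eqk: "prob {\<omega>\<in>space M. t \<le> opt_score S (wdsY (\<lambda>q. Y q \<omega>) pos lw m)} = prob (?E k)" if "k < m" for k
    using INV(2)[OF g, where \<Phi>="\<lambda>ws. t \<le> opt_score S ws"]
      INV(2)[OF posk_good[OF that], where \<Phi>="\<lambda>ws. t \<le> opt_score S ws"] by simp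
  have "(prob {\<omega>\<in>space M. t \<le> opt_score S (wdsY (\<lambda>q. Y q \<omega>) pos lw m)}) ^ m = (\<Prod>k<m. prob (?E k))"
  proof -
    have "(\<Prod>k<m. prob (?E k)) = (\<Prod>k<m. prob {\<omega>\<in>space M. t \<le> opt_score S (wdsY (\<lambda>q. Y q \<omega>) pos lw m)})"
      by (rule prod.cong) (simp_all add: eqk)
    then show ?thesis by simp
  qed
  also have "\<dots> = prob (\<Inter>k<m. ?E k)"
    by (rule indep_blocks[symmetric]) (use m0 posk_good posk_disj in auto)
  also have "\<dots> \<le> prob ?B"
  proof (rule finite_measure_mono)
    show "?B \<in> events" by (rule INV(1)[OF gB])
    show "(\<Inter>k<m. ?E k) \<subseteq> ?B"
    proof
      fix \<omega> assume h: "\<omega> \<in> (\<Inter>k<m. ?E k)"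
      then have om: "\<omega> \<in> space M" using m0 by auto
      have ZA: "\<forall>i r. r < m \<longrightarrow> Y (Suc i, Suc r) \<omega> \<in> A"
        using YA[OF _ om] by (auto simp: Pos_def)
      have "real m * t \<le> opt_score S (wdsY (\<lambda>q. Y q \<omega>) (\<lambda>j i. (i+1, j+1)) (\<lambda>_. N') m)"
        by (rule combine[OF m0 sym ZA sumle]) (use h in auto)
      then show "\<omega> \<in> ?B" using om by simp
    qed
  qed
  finally show ?thesis .
qed

lemma L_N_eq: "L_N S m X N \<omega> = opt_score S (wdsY (\<lambda>q. Y q \<omega>) (\<lambda>j i. (i+1, j+1)) (\<lambda>_. N) m)"
proof -
  have "map (\<lambda>j. map (\<lambda>i. X i j \<omega>) [1..<N+1]) [1..<m+1] = wdsY (\<lambda>q. Y q \<omega>) (\<lambda>j i. (i+1, j+1)) (\<lambda>_. N) m"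
  proof -
    have u: "[1..<K+1] = map Suc [0..<K]" for K by (simp add: map_Suc_upt)
    show ?thesis unfolding u by (simp add: wdsY_def Y_def comp_def)
  qed
  then show ?thesis unfolding L_N_def by simp
qed

end



context ctx begin

lemma opt_empty:
  assumes "length ws = m" "\<forall>j<m. ws!j = []" shows "opt_score S ws \<le> 0"
proof -
  have m0: "0 < length ws" using assms m2 by simp
  obtain k \<pi> where v: "valid ws k \<pi>" and o: "opt_score S ws = score S ws k \<pi>"
    using opt_attained[OF m0] by metis
  have "k = 0" using valid_k_le[OF v m0] assms m2 by simp
  then show ?thesis using o by (simp add: score_def)
qed

lemma main:
  fixes S :: "real list \<Rightarrow> real" and x :: real and n :: nat
  assumes Snn: "\<And>xs. length xs = m \<Longrightarrow> set xs \<subseteq> A \<Longrightarrow> S xs \<ge> 0"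
    and sym: "\<And>xs ys. length xs = m \<Longrightarrow> set xs \<subseteq> A \<Longrightarrow> mset ys = mset xs \<Longrightarrow> S ys = S xs"
    and x0: "x > 0"
  shows "measure M {\<omega> \<in> space M. L_N S m X (m^2 * n) \<omega> \<ge> real (m^2) * x}
         \<le> inverse (2 ^ m) * real m ^ (4 * m) * real n ^ (2 * m) *
           (measure M {\<omega> \<in> space M.
              L_N S m X (m * n) \<omega> \<ge> real m * (x - Sup (S ` {xs. length xs = m \<and> set xs \<subseteq> A}))})
             powr (1 / real m)"
proof -
  have m0: "0 < m" using m2 by simp
  define SA where "SA = {xs. length xs = m \<and> set xs \<subseteq> A}"
  define sst where "sst = Sup (S ` SA)"
  define pB where "pB = prob {\<omega> \<in> space M. L_N S m X (m * n) \<omega> \<ge> real m * (x - sst)}"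
  define LHS where "LHS = prob {\<omega> \<in> space M. L_N S m X (m^2 * n) \<omega> \<ge> real (m^2) * x}"
  define c where "c = inverse (2 ^ m) * real m ^ (4 * m) * real n ^ (2 * m)"
  have finSA: "finite SA"
  proof -
    have "SA = {xs. set xs \<subseteq> A \<and> length xs = m}" unfolding SA_def by auto
    then show ?thesis using finite_lists_length_eq[OF finA, of m] by simp
  qed
  obtain \<omega>0 where "\<omega>0 \<in> space M" using not_empty by blast
  then obtain a where aA: "a \<in> A" using XA[of 1 1 \<omega>0] m2 by auto
  have "replicate m a \<in> SA" using aA unfolding SA_def by auto
  then have SAne: "SA \<noteq> {}" by blast
  have Sle: "S xs \<le> sst" if "xs \<in> SA" for xs
    unfolding sst_def using finSA that by (intro cSup_upper bdd_above_finite) auto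
  have sst0: "0 \<le> sst"
  proof -
    obtain xs where "xs \<in> SA" using SAne by blast
    then show ?thesis using Sle[of xs] Snn unfolding SA_def by force
  qed
  have pB0: "0 \<le> pB" unfolding pB_def by simp
  have c0: "0 \<le> c" unfolding c_def by simp
  have goal: "LHS \<le> c * pB powr (1 / real m)"
  proof (cases "n = 0")
    case True
    have e: "{\<omega> \<in> space M. L_N S m X (m^2 * n) \<omega> \<ge> real (m^2) * x} = {}"
    proof -
      have "L_N S m X (m^2 * n) \<omega> \<le> 0" for \<omega>
        unfolding L_N_eq using True by (intro opt_empty) (auto simp: nth_wdsY)
      moreover have "0 < real (m^2) * x" using m0 x0 by simp
      ultimately have "\<not> (real (m^2) * x \<le> L_N S m X (m^2 * n) \<omega>)" for \<omega>
        by (meson leD order.strict_trans2)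
      then show ?thesis by blast
    qed
    have "LHS = 0" unfolding LHS_def e by simp
    then show ?thesis using c0 pB0 by simp
  next
    case n0: False
    show ?thesis
    proof (cases "x \<le> sst")
      case True
      have "{\<omega> \<in> space M. L_N S m X (m * n) \<omega> \<ge> real m * (x - sst)} = space M"
      proof -
        have "real m * (x - sst) \<le> L_N S m X (m * n) \<omega>" for \<omega>
        proof -
          have "real m * (x - sst) \<le> 0" using True by (simp add: mult_nonneg_nonpos)
          also have "\<dots> \<le> L_N S m X (m * n) \<omega>" unfolding L_N_eq using m0 by (intro opt_nonneg) simp
          finally show ?thesis .
        qed
        then show ?thesis by auto
      qed
      then have pB1: "pB = 1" unfolding pB_def by (simp add: prob_space)
      have "(2::real) ^ m \<le> real m ^ m" using m2 by (intro power_mono) auto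
      also have "\<dots> \<le> real m ^ (4 * m)" using m2 by (intro power_increasing) auto
      finally have "1 \<le> inverse (2 ^ m) * real m ^ (4 * m)" by (simp add: field_simps)
      moreover have "1 \<le> real n ^ (2 * m)" using n0 by simp
      ultimately have "1 \<le> c" unfolding c_def
        by (metis mult_mono' mult_1_right order.trans zero_le_one)
      moreover have "LHS \<le> 1" unfolding LHS_def by simp
      ultimately show ?thesis using pB1 by simp
    next
      case False
      then have xs: "sst < x" by simp
      define N where "N = m * m * n"
      define t where "t = x - sst"
      define Cf where "Cf = (PiE {..<m} (\<lambda>_. {..<N})) \<times> (PiE {..<m} (\<lambda>_. {1..m*n}))"
      define C where "C = {(st, lw) \<in> Cf. (\<Sum>j<m. lw j) \<le> m*n}"
      define lay where "lay st = (\<lambda>j i. (st j + i + 1, j + 1))" for st :: "nat \<Rightarrow> nat"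
      define E where "E cf = {\<omega>\<in>space M. t \<le> opt_score S (wdsY (\<lambda>q. Y q \<omega>) (lay (fst cf)) (snd cf) m)}" for cf
      have glay: "good (lay st) lw" for st lw
        unfolding good_def lay_def Pos_def by (auto simp: inj_on_def)
      have finCf: "finite Cf" unfolding Cf_def by (auto intro!: finite_PiE)
      have finC: "finite C" unfolding C_def by (rule finite_subset[OF _ finCf]) auto
      have evE: "E cf \<in> events" for cf unfolding E_def by (rule INV(1)[OF glay])
      have incl: "{\<omega> \<in> space M. L_N S m X (m^2 * n) \<omega> \<ge> real (m^2) * x} \<subseteq> (\<Union>cf\<in>C. E cf)"
      proof
        fix \<omega> assume h: "\<omega> \<in> {\<omega> \<in> space M. L_N S m X (m^2 * n) \<omega> \<ge> real (m^2) * x}"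
        then have om: "\<omega> \<in> space M" by simp
        define ws where "ws = wdsY (\<lambda>q. Y q \<omega>) (\<lambda>j i. (i+1, j+1)) (\<lambda>_. N) m"
        have big: "real (m*m) * x \<le> opt_score S ws"
          using h unfolding ws_def N_def L_N_eq by (simp add: power2_eq_square mult.assoc)
        have wsA: "\<forall>j<m. set (ws!j) \<subseteq> A"
          using YA[OF _ om] by (auto simp: ws_def nth_wdsY Pos_def)
        have Sb: "\<forall>xs. length xs = m \<longrightarrow> set xs \<subseteq> A \<longrightarrow> 0 \<le> S xs \<and> S xs \<le> sst"
          using Snn Sle unfolding SA_def by auto
        obtain st lw where c1: "\<forall>j<m. 1 \<le> lw j \<and> st j + lw j \<le> m*m*n"
          and c2: "(\<Sum>j<m. lw j) \<le> m*n"
          and c3: "x - sst \<le> opt_score S (map (\<lambda>j. map (\<lambda>i. ws!j!(st j + i)) [0..<lw j]) [0..<m])"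
          using inclusion[of ws m n A S sst x] m0 big wsA Sb sst0 xs
          by (auto simp: ws_def nth_wdsY N_def)
        define st' where "st' = restrict st {..<m}"
        define lw' where "lw' = restrict lw {..<m}"
        have "(st', lw') \<in> C"
        proof -
          have "lw j \<le> m*n" if "j < m" for j
            using c2 member_le_sum[of j "{..<m}" lw] that by simp
          moreover have "(\<Sum>j<m. lw' j) = (\<Sum>j<m. lw j)" unfolding lw'_def by simp
          ultimately show ?thesis using c1 c2 unfolding C_def Cf_def st'_def lw'_def N_def
            by (force simp: PiE_iff)
        qed
        moreover have "map (\<lambda>j. map (\<lambda>i. ws!j!(st j + i)) [0..<lw j]) [0..<m] = wdsY (\<lambda>q. Y q \<omega>) (lay st') lw' m"
          unfolding wdsY_def lay_def st'_def lw'_def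
        proof (intro map_cong refl)
          fix j i assume j: "j \<in> set [0..<m]" and i: "i \<in> set [0..<restrict lw {..<m} j]"
          have "st j + i < N" using c1 j i unfolding N_def by auto
          then show "ws ! j ! (st j + i) = Y (restrict st {..<m} j + i + 1, j + 1) \<omega>"
            using j by (simp add: ws_def nth_wdsY)
        next
          fix j assume "j \<in> set [0..<m]"
          then show "[0..<lw j] = [0..<restrict lw {..<m} j]" by simp
        qed
        ultimately show "\<omega> \<in> (\<Union>cf\<in>C. E cf)" using c3 om unfolding E_def t_def by force
      qed
      have Ebound: "prob (E cf) \<le> pB powr (1 / real m)" if "cf \<in> C" for cf
      proof -
        obtain st lw where cf: "cf = (st, lw)" by fastforce
        have sumle: "(\<Sum>j<m. lw j) \<le> m*n" using that unfolding cf C_def by auto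
        have "prob (E cf) ^ m \<le> pB"
          using q_bound[OF sym glay sumle, where t=t]
          unfolding E_def pB_def cf L_N_eq t_def by simp
        moreover have "0 \<le> prob (E cf)" by simp
        ultimately have "(prob (E cf) ^ m) powr (1 / real m) \<le> pB powr (1 / real m)"
          by (intro powr_mono2) auto
        moreover have "(prob (E cf) ^ m) powr (1 / real m) = prob (E cf)"
        proof (cases "prob (E cf) = 0")
          case True then show ?thesis using m0 by simp
        next
          case False
          then have pos: "0 < prob (E cf)" using measure_nonneg[of M "E cf"] by linarith
          have "(prob (E cf) ^ m) powr (1 / real m) = (prob (E cf) powr real m) powr (1 / real m)"
            using pos by (simp add: powr_realpow)
          also have "\<dots> = prob (E cf)" using m0 by (simp add: powr_powr)
          finally show ?thesis .
        qed
        ultimately show ?thesis by simp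
      qed
      have "LHS \<le> prob (\<Union>cf\<in>C. E cf)"
        unfolding LHS_def by (rule finite_measure_mono[OF incl]) (use finC evE in auto)
      also have "\<dots> \<le> (\<Sum>cf\<in>C. prob (E cf))"
        by (rule finite_measure_subadditive_finite) (use finC evE in auto)
      also have "\<dots> \<le> real (card C) * pB powr (1 / real m)"
        using sum_bounded_above[of C "\<lambda>cf. prob (E cf)" "pB powr (1 / real m)"] Ebound by simp
      also have "\<dots> \<le> c * pB powr (1 / real m)"
      proof (rule mult_right_mono)
        have "card C \<le> card Cf" unfolding C_def by (rule card_mono) (auto simp: Cf_def intro!: finite_PiE)
        also have "card Cf = N ^ m * (m*n) ^ m"
          unfolding Cf_def by (simp add: card_cartesian_product card_PiE)
        finally have "real (card C) \<le> real N ^ m * (real m * real n) ^ m"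
          by (metis of_nat_le_iff of_nat_mult of_nat_power)
        also have "\<dots> = real m ^ (3*m) * real n ^ (2*m)"
        proof -
          have e3: "real m ^ (3*m) = (real m ^ m)^3" by (simp add: power_mult[symmetric] mult.commute)
          have e2: "real n ^ (2*m) = (real n ^ m)^2" by (simp add: power_mult[symmetric] mult.commute)
          show ?thesis unfolding N_def e3 e2 by (simp add: power_mult_distrib power3_eq_cube power2_eq_square)
        qed
        also have "\<dots> \<le> c"
        proof -
          have "(2::real) ^ m \<le> real m ^ m" using m2 by (intro power_mono) auto
          then have "2 ^ m * (real m ^ (3*m) * real n ^ (2*m)) \<le> real m ^ m * (real m ^ (3*m) * real n ^ (2*m))"
            by (intro mult_right_mono) auto
          also have "\<dots> = real m ^ (4*m) * real n ^ (2*m)"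
            by (simp add: power_add[symmetric] mult.assoc)
          finally show ?thesis unfolding c_def by (simp add: field_simps)
        qed
        finally show "real (card C) \<le> c" .
      qed simp
      finally show ?thesis .
    qed
  qed
  then show ?thesis unfolding LHS_def c_def pB_def sst_def SA_def by simp
qed

end

theorem proposition2p3:
  fixes M :: "'w measure" and m :: nat and A :: "real set"
    and X :: "nat \<Rightarrow> nat \<Rightarrow> 'w \<Rightarrow> real" and S :: "real list \<Rightarrow> real" and D :: real
  assumes "prob_space M"
    and "m \<ge> 2"
    and "finite A"
    and "\<And>i j. i \<ge> 1 \<Longrightarrow> j \<in> {1..m} \<Longrightarrow> X i j \<in> borel_measurable M"
    and "\<And>i j \<omega>. i \<ge> 1 \<Longrightarrow> j \<in> {1..m} \<Longrightarrow> \<omega> \<in> space M \<Longrightarrow> X i j \<omega> \<in> A"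
    and "prob_space.indep_vars M (\<lambda>_. borel) (\<lambda>(i, j). X i j) ({1..} \<times> {1..m})"
    and "\<And>i j. i \<ge> 1 \<Longrightarrow> j \<in> {1..m} \<Longrightarrow> distr M borel (X i j) = distr M borel (X 1 1)"
    and "\<And>xs. length xs = m \<Longrightarrow> set xs \<subseteq> A \<Longrightarrow> S xs \<ge> 0"
    and "\<exists>xs. length xs = m \<and> set xs \<subseteq> A \<and> S xs \<noteq> 0"
    and "\<And>xs ys. length xs = m \<Longrightarrow> set xs \<subseteq> A \<Longrightarrow> mset ys = mset xs \<Longrightarrow> S ys = S xs"
    and "D > 0"
    and "\<And>xs ys. length xs = m \<Longrightarrow> length ys = m \<Longrightarrow> set xs \<subseteq> A \<Longrightarrow> set ys \<subseteq> A \<Longrightarrow>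
           card {i. i < m \<and> xs ! i \<noteq> ys ! i} \<le> 1 \<Longrightarrow> \<bar>S xs - S ys\<bar> \<le> D"
    and "x > (0::real)"
  shows "measure M {\<omega> \<in> space M. L_N S m X (m^2 * n) \<omega> \<ge> real (m^2) * x}
         \<le> inverse (2 ^ m) * real m ^ (4 * m) * real n ^ (2 * m) *
           (measure M {\<omega> \<in> space M.
              L_N S m X (m * n) \<omega> \<ge> real m * (x - Sup (S ` {xs. length xs = m \<and> set xs \<subseteq> A}))})
             powr (1 / real m)"
  proof -
  have c: "ctx M m A X"
    by (intro ctx.intro ctx_axioms.intro assms(1-7))
  interpret ctx M m A X by (rule c)
  show ?thesis by (rule main[OF assms(8) assms(10) assms(13)])
qed

end
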